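(* Let $b=1/2$, let $\mathcal B$ be a Hamel basis of $\mathbb{R}$ over $\mathbb{Q}$ with $b\in\mathcal B$, and let $\pi:\mathbb{R}\to[0,1]$ be defined by $\pi(x)=\lambda^x_b-\lfloor\lambda^x_b\rfloor$ if $\lambda^x_b$ is not an odd integer, and $\pi(x)=1$ if $\lambda^x_b$ is an odd integer. Then $\pi$ is an extreme function for $I_b$: whenever $\pi_1,\pi_2:\mathbb{R}\to\mathbb{R}_+$ are valid functions for $I_b$ with $\pi=\tfrac12\pi_1+\tfrac12\pi_2$, we have $\pi_1=\pi_2=\pi$.
   Context: For $b\in\mathbb{R}\setminus\mathbb{Z}$, $I_b$ is the set of finite-support functions $y:\mathbb{R}\to\mathbb{Z}_+$ (i.e. $y(x)=0$ for all but finitely many $x$) such that $\sum_{x\in\mathbb{R}} y(x)\,x\equiv b \pmod 1$. A function $\pi:\mathbb{R}\to\mathbb{R}_+$ is a (nonnegative) valid function for $I_b$ if $\sum_{x\in\mathbb{R}}\pi(x)y(x)\ge 1$ for every $y\in I_b$. A Hamel basis is a basis of $\mathbb{R}$ as a vector space over $\mathbb{Q}$; for $x\in\mathbb{R}$, $\lambda^x_b\in\mathbb{Q}$ denotes the coefficient of the basis element $b$ in the unique expression of $x$ as a finite rational linear combination of elements of $\mathcal B$. *)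

theory Defs
  imports Complex_Main
begin

definition qscale :: "rat \<Rightarrow> real \<Rightarrow> real" where
  "qscale q x = of_rat q * x"

definition hamel_basis :: "real set \<Rightarrow> bool" where
  "hamel_basis B \<longleftrightarrow> \<not> module.dependent qscale B \<and> module.span qscale B = UNIV"

definition hamel_coeff :: "real set \<Rightarrow> real \<Rightarrow> real \<Rightarrow> rat" where
  "hamel_coeff B x b = module.representation qscale B x b"

definition I_set :: "real \<Rightarrow> (real \<Rightarrow> nat) set" where
  "I_set b = {y. finite {x. y x \<noteq> 0} \<and>
      (\<Sum>x\<in>{x. y x \<noteq> 0}. real (y x) * x) - b \<in> \<int>}"

definition valid_function :: "real \<Rightarrow> (real \<Rightarrow> real) \<Rightarrow> bool" where
  "valid_function b \<pi> \<longleftrightarrow> (\<forall>x. \<pi> x \<ge> 0) \<and>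
      (\<forall>y\<in>I_set b. (\<Sum>x\<in>{x. y x \<noteq> 0}. \<pi> x * real (y x)) \<ge> 1)"

definition extreme_function :: "real \<Rightarrow> (real \<Rightarrow> real) \<Rightarrow> bool" where
  "extreme_function b \<pi> \<longleftrightarrow> valid_function b \<pi> \<and>
      (\<forall>\<pi>1 \<pi>2. valid_function b \<pi>1 \<and> valid_function b \<pi>2 \<and>
         \<pi> = (\<lambda>x. (1/2) * \<pi>1 x + (1/2) * \<pi>2 x) \<longrightarrow> \<pi>1 = \<pi> \<and> \<pi>2 = \<pi>)"

end

theory Submission
  imports Defs
begin

lemma module_qscale: "module qscale"
  by (unfold_locales) (auto simp: qscale_def of_rat_add of_rat_mult algebra_simps)

locale hamel_ctx =
  fixes B :: "real set"
  assumes hb: "hamel_basis B" and hB: "(1/2::real) \<in> B"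
begin

definition L :: "real \<Rightarrow> rat" where "L x = hamel_coeff B x (1/2)"

lemma indep: "\<not> module.dependent qscale B" and spanU: "\<And>x. x \<in> module.span qscale B"
  using hb by (auto simp: hamel_basis_def)

lemma L_add: "L (x + y) = L x + L y"
  unfolding L_def hamel_coeff_def
  using module.representation_add[OF module_qscale, of B y x] indep spanU by simp

lemma L_diff: "L (x - y) = L x - L y"
  unfolding L_def hamel_coeff_def
  using module.representation_diff[OF module_qscale, of B y x] indep spanU by simp

lemma L_scale: "L (of_rat r * x) = r * L x"
  unfolding L_def hamel_coeff_def
  using module.representation_scale[OF module_qscale, of B x r] indep spanU
  by (simp add: qscale_def)

lemma L_half: "L (1/2) = 1"
  unfolding L_def hamel_coeff_def
  using module.representation_basis[OF module_qscale, of B "1/2"] indep hB by simp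

lemma L_zero: "L 0 = 0"
  using L_diff[of 0 0] by simp

lemma L_point: "L (of_rat r / 2) = r"
  using L_scale[of r "1/2"] L_half by simp

lemma L_int: "L (of_int k) = 2 * of_int k"
proof -
  have "(of_int k :: real) = of_rat (2 * of_int k) / 2" by (simp add: of_rat_mult)
  then show ?thesis using L_point by metis
qed

lemma L_nat_mult: "L (of_nat n * x) = of_nat n * L x"
  using L_scale[of "of_nat n" x] by simp

lemma L_sum: "finite S \<Longrightarrow> L (\<Sum>x\<in>S. f x) = (\<Sum>x\<in>S. L (f x))"
  by (induction S rule: finite_induct) (auto simp: L_zero L_add)

end


definition phi :: "rat \<Rightarrow> real" where
  "phi l = (if (\<exists>k::int. l = of_int k \<and> odd k) then 1 else of_rat (l - of_int \<lfloor>l\<rfloor>))"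

lemma phi_frac: "\<not> (\<exists>k::int. l = of_int k \<and> odd k) \<Longrightarrow> phi l = of_rat (l - of_int \<lfloor>l\<rfloor>)"
  unfolding phi_def by (rule if_not_P)

lemma phi_odd: "odd k \<Longrightarrow> phi (of_int k) = 1"
  by (auto simp: phi_def)

lemma phi_even: "even k \<Longrightarrow> phi (of_int k) = 0"
  by (auto simp: phi_def)

lemma phi_nonneg: "phi l \<ge> 0"
  by (auto simp: phi_def)

lemma phi_nonint: "l \<notin> \<int> \<Longrightarrow> phi l = of_rat (l - of_int \<lfloor>l\<rfloor>)"
  by (auto simp: phi_def)

locale hamel_pi = hamel_ctx +
  fixes \<pi> :: "real \<Rightarrow> real"
  assumes pi_eq: "\<And>x. \<pi> x = phi (L x)"
begin

lemma valid_pi: "valid_function (1/2) \<pi>"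
  unfolding valid_function_def
proof (intro conjI allI ballI)
  fix x show "\<pi> x \<ge> 0" by (simp add: pi_eq phi_nonneg)
next
  fix y assume yI: "y \<in> I_set (1/2)"
  define S where "S = {x. y x \<noteq> 0}"
  have finS: "finite S" using yI by (simp add: I_set_def S_def)
  obtain k where k: "(\<Sum>x\<in>S. real (y x) * x) - 1/2 = of_int k"
    using yI unfolding I_set_def S_def by (auto elim: Ints_cases)
  have "L (\<Sum>x\<in>S. real (y x) * x) = L (1/2 + of_int k)" using k by (simp add: algebra_simps)
  then have Lsum: "(\<Sum>x\<in>S. of_nat (y x) * L x) = 1 + 2 * of_int k"
    by (simp add: L_sum[OF finS] L_nat_mult L_add L_half L_int)
  have nn: "\<And>x. \<pi> x * real (y x) \<ge> 0" by (simp add: pi_eq phi_nonneg)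
  show "(\<Sum>x\<in>S. \<pi> x * real (y x)) \<ge> 1"
  proof (cases "\<exists>x\<in>S. \<exists>k::int. L x = of_int k \<and> odd k")
    case True
    then obtain x j where xS: "x \<in> S" and j: "L x = of_int j" "odd j" by blast
    have "1 \<le> \<pi> x * real (y x)" using xS j by (simp add: pi_eq phi_odd S_def)
    also have "\<dots> \<le> (\<Sum>x\<in>S. \<pi> x * real (y x))"
      by (rule member_le_sum[OF xS _ finS]) (simp add: nn)
    finally show ?thesis .
  next
    case False
    have pix: "\<And>x. x \<in> S \<Longrightarrow> \<pi> x * real (y x) = of_rat ((L x - of_int \<lfloor>L x\<rfloor>) * of_nat (y x))"
      using False by (auto simp: pi_eq phi_frac of_rat_mult)
    define m where "m = 1 + 2 * k - (\<Sum>x\<in>S. \<lfloor>L x\<rfloor> * int (y x))"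
    have "(\<Sum>x\<in>S. (L x - of_int \<lfloor>L x\<rfloor>) * of_nat (y x)) = 
          (\<Sum>x\<in>S. of_nat (y x) * L x) - (\<Sum>x\<in>S. of_int (\<lfloor>L x\<rfloor> * int (y x)))"
      by (simp add: sum_subtractf[symmetric] algebra_simps)
    also have "\<dots> = of_int m" using Lsum by (simp add: m_def)
    finally have rs: "(\<Sum>x\<in>S. (L x - of_int \<lfloor>L x\<rfloor>) * of_nat (y x)) = of_int m" .
    have sumeq: "(\<Sum>x\<in>S. \<pi> x * real (y x)) = of_int m"
    proof -
      have "(\<Sum>x\<in>S. \<pi> x * real (y x)) = (\<Sum>x\<in>S. of_rat ((L x - of_int \<lfloor>L x\<rfloor>) * of_nat (y x)))"
        by (rule sum.cong) (auto simp: pix)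
      also have "\<dots> = of_rat (of_int m)" by (simp add: of_rat_sum[symmetric] rs)
      finally show ?thesis by simp
    qed
    have "m \<ge> 0"
    proof -
      have "(0::real) \<le> of_int m" unfolding sumeq[symmetric] by (rule sum_nonneg) (simp add: nn)
      then show ?thesis by simp
    qed
    moreover have "m \<noteq> 0"
    proof
      assume m0: "m = 0"
      have tnn: "\<And>x. x \<in> S \<Longrightarrow> (L x - of_int \<lfloor>L x\<rfloor>) * of_nat (y x) \<ge> 0" by simp
      have "\<forall>x\<in>S. (L x - of_int \<lfloor>L x\<rfloor>) * of_nat (y x) = 0"
        using sum_nonneg_eq_0_iff[OF finS, of "\<lambda>x. (L x - of_int \<lfloor>L x\<rfloor>) * of_nat (y x)"] tnn rs m0
        by simp
      then have intx: "\<And>x. x \<in> S \<Longrightarrow> L x = of_int \<lfloor>L x\<rfloor>" by (auto simp: S_def)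
      have ev: "\<And>x. x \<in> S \<Longrightarrow> even \<lfloor>L x\<rfloor>" using False intx by blast
      have "even (\<Sum>x\<in>S. \<lfloor>L x\<rfloor> * int (y x))" by (rule dvd_sum) (simp add: ev)
      then show False using m0 unfolding m_def by presburger
    qed
    ultimately have "m \<ge> 1" by simp
    then show ?thesis using sumeq by simp
  qed
qed


end

lemma phi_frac_int: "0 < r \<Longrightarrow> r < 1 \<Longrightarrow> phi (of_int j + r) = of_rat r"
proof -
  assume r: "0 < r" "r < 1"
  have fl: "\<lfloor>of_int j + r\<rfloor> = j" using r by (simp add: floor_eq_iff)
  have "\<not> (\<exists>k::int. of_int j + r = of_int k \<and> odd k)"
  proof
    assume "\<exists>k::int. of_int j + r = of_int k \<and> odd k"
    then obtain k where "of_int j + r = of_int k" by blast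
    then have "r = of_int (k - j)" by simp
    with r have "(0::rat) < of_int (k - j)" "of_int (k - j) < (1::rat)" by simp_all
    then have "0 < k - j" "k - j < 1" by (simp_all only: of_int_0_less_iff of_int_less_1_iff)
    then show False by linarith
  qed
  then show ?thesis using fl by (simp add: phi_frac)
qed

lemma sum_list_count_real:
  fixes f :: "'a \<Rightarrow> real"
  assumes "set xs \<subseteq> X" "finite X"
  shows "sum_list (map f xs) = (\<Sum>z\<in>X. of_nat (count_list xs z) * f z)"
  using assms(1)
proof (induction xs)
  case Nil then show ?case by simp
next
  case (Cons a xs)
  have aX: "a \<in> X" using Cons.prems by simp
  have "(\<Sum>z\<in>X. of_nat (count_list (a # xs) z) * f z) =
        (\<Sum>z\<in>X. of_nat (count_list xs z) * f z + (if a = z then f z else 0))"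
    by (rule sum.cong) (auto simp: algebra_simps)
  also have "\<dots> = (\<Sum>z\<in>X. of_nat (count_list xs z) * f z) + f a"
    using aX assms(2) by (simp add: sum.distrib)
  finally show ?case using Cons by simp
qed

lemma count_list_supp: "{x. real (count_list xs x) \<noteq> 0} = set xs"
  by (auto simp: count_list_0_iff)

context hamel_pi
begin

lemma main_eq:
  assumes v1: "valid_function (1/2) \<pi>1" and v2: "valid_function (1/2) \<pi>2"
    and avg: "\<pi> = (\<lambda>x. (1/2) * \<pi>1 x + (1/2) * \<pi>2 x)"
  shows "\<pi>1 x = \<pi> x"
proof -
  have nn1: "\<And>z. \<pi>1 z \<ge> 0" and nn2: "\<And>z. \<pi>2 z \<ge> 0" using v1 v2 by (auto simp: valid_function_def)
  have zero: "\<pi>1 z = 0" if "\<pi> z = 0" for z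
  proof -
    have "\<pi> z = 1/2 * \<pi>1 z + 1/2 * \<pi>2 z" using avg by (rule fun_cong)
    then show ?thesis using that nn1[of z] nn2[of z] by linarith
  qed
  have ge: "sum_list (map \<pi>' xs) \<ge> 1" if v: "valid_function (1/2) \<pi>'" and xs: "sum_list xs - 1/2 \<in> \<int>" for \<pi>' xs
  proof -
    define y where "y = count_list xs"
    have supp: "{x. y x \<noteq> 0} = set xs" by (auto simp: y_def count_list_0_iff)
    have "(\<Sum>x\<in>set xs. real (y x) * x) = sum_list xs"
      using sum_list_count_real[of xs "set xs" "\<lambda>x. x"] by (simp add: y_def)
    then have "y \<in> I_set (1/2)" unfolding I_set_def mem_Collect_eq supp using xs by simp
    then have "(\<Sum>x\<in>set xs. \<pi>' x * real (y x)) \<ge> 1" using v supp unfolding valid_function_def by metis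
    moreover have "sum_list (map \<pi>' xs) = (\<Sum>x\<in>set xs. \<pi>' x * real (y x))"
      using sum_list_count_real[of xs "set xs" \<pi>'] by (simp add: y_def mult.commute)
    ultimately show ?thesis by simp
  qed
  have tight: "sum_list (map \<pi>1 xs) = 1" if xs: "sum_list xs - 1/2 \<in> \<int>" and t: "sum_list (map \<pi> xs) = 1" for xs
  proof -
    have e: "\<And>z. \<pi> z = 1/2 * \<pi>1 z + 1/2 * \<pi>2 z" using avg by (rule fun_cong)
    define c where "c z = real (count_list xs z)" for z
    have "(\<Sum>z\<in>set xs. c z * \<pi> z) = (\<Sum>z\<in>set xs. 1/2 * (c z * \<pi>1 z) + 1/2 * (c z * \<pi>2 z))"
      by (rule sum.cong) (simp_all add: e distrib_left)
    also have "\<dots> = 1/2 * (\<Sum>z\<in>set xs. c z * \<pi>1 z) + 1/2 * (\<Sum>z\<in>set xs. c z * \<pi>2 z)"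
      by (simp add: sum.distrib sum_distrib_left)
    finally have "sum_list (map \<pi> xs) = (1/2) * sum_list (map \<pi>1 xs) + (1/2) * sum_list (map \<pi>2 xs)"
      using sum_list_count_real[of xs "set xs" \<pi>] sum_list_count_real[of xs "set xs" \<pi>1]
        sum_list_count_real[of xs "set xs" \<pi>2] unfolding c_def by simp
    then show ?thesis using ge[OF v1 xs] ge[OF v2 xs] t by linarith
  qed
  define t where "t = L x"
  show ?thesis
  proof (cases "t \<in> \<int>")
    case True
    then obtain k where tk: "t = of_int k" by (auto elim: Ints_cases)
    show ?thesis
    proof (cases "odd k")
      case True
      define w where "w = 1/2 - x"
      have Lw: "L w = of_int (1 - k)"
        by (simp add: w_def L_diff L_half t_def[symmetric] tk)
      have pw: "\<pi> w = 0" using Lw True phi_even[of "1-k"] by (simp add: pi_eq)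
      have px: "\<pi> x = 1" using True by (simp add: pi_eq t_def[symmetric] tk phi_odd)
      have "sum_list (map \<pi>1 [x, w]) = 1" by (rule tight) (simp_all add: w_def[symmetric] px pw, simp add: w_def)
      then show ?thesis using zero[OF pw] px by simp
    next
      case False
      have px: "\<pi> x = 0" using False by (simp add: pi_eq t_def[symmetric] tk phi_even)
      show ?thesis using zero[OF px] px by simp
    qed
  next
    case False
    define n where "n = \<lfloor>t\<rfloor>"
    define f where "f = t - of_int n"
    have f0: "f \<ge> 0" "f < 1" unfolding f_def n_def by (simp_all add: floor_less_cancel)
    have "f \<noteq> 0" using False unfolding f_def by auto
    with f0 have f01: "0 < f" "f < 1" by auto
    obtain a b where ab: "quotient_of f = (a, b)" by (cases "quotient_of f")
    have bpos: "b > 0" using quotient_of_denom_pos[OF ab] .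
    have fab: "f = of_int a / of_int b" using quotient_of_div[OF ab] .
    have apos: "a > 0" using f01 fab bpos by (simp add: zero_less_divide_iff)
    have alb: "a < b" using f01 fab bpos by (simp add: divide_less_eq)
    define p where "p = nat a"
    define q where "q = nat b"
    have pq: "0 < p" "p < q" using apos alb bpos by (auto simp: p_def q_def)
    have fq: "f = of_nat p / of_nat q" using fab apos bpos by (simp add: p_def q_def)
    have q2: "q \<ge> 2" using pq by simp
    have qpos: "real q > 0" "rat_of_nat q > 0" using pq by auto
    define c :: real where "c = of_rat (1 / of_nat q) / 2"
    have Lc: "L c = 1 / of_nat q" by (simp add: c_def L_point)
    have c_real: "c = 1 / (2 * real q)" by (simp add: c_def of_rat_divide)
    have r01: "(0::rat) < 1 / of_nat q" "1 / of_nat q < (1::rat)" using q2 by auto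
    have pc: "\<pi> c = 1 / real q"
      using phi_frac_int[OF r01, of 0] by (simp add: pi_eq Lc of_rat_divide)
    have pc1: "\<pi>1 c = 1 / real q"
    proof -
      have "sum_list (map \<pi>1 (replicate q c)) = 1"
      proof (rule tight)
        show "sum_list (replicate q c) - 1/2 \<in> \<int>" using qpos by (simp add: sum_list_replicate c_real)
        show "sum_list (map \<pi> (replicate q c)) = 1" using qpos by (simp add: sum_list_replicate pc)
      qed
      then have "real q * \<pi>1 c = 1" by (simp add: sum_list_replicate)
      then show ?thesis using qpos by (simp add: field_simps)
    qed
    have Lx: "L x = of_int n + of_nat p / of_nat q" using fq unfolding f_def t_def by simp
    have px: "\<pi> x = real p / real q"
    proof -
      have "0 < of_nat p / (of_nat q :: rat)" "of_nat p / (of_nat q :: rat) < 1" using pq by auto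
      from phi_frac_int[OF this, of n] show ?thesis by (simp add: pi_eq Lx of_rat_divide)
    qed
    show ?thesis
    proof (cases "even n")
      case True
      define m where "m = q - p"
      have mr: "real m = real q - real p" "rat_of_nat m = of_nat q - of_nat p" using pq by (auto simp: m_def)
      define w where "w = 1/2 - x - of_nat m * c"
      have Lw: "L w = of_int (-n)"
      proof -
        have "L w = 1 - L x - of_nat m * (1 / of_nat q)" by (simp add: w_def L_diff L_half L_nat_mult Lc)
        also have "\<dots> = of_int (-n)" using qpos by (simp add: Lx mr field_simps)
        finally show ?thesis .
      qed
      have pw: "\<pi> w = 0" using Lw True phi_even[of "-n"] by (simp add: pi_eq)
      have "sum_list (map \<pi>1 (x # w # replicate m c)) = 1"
      proof (rule tight)
        show "sum_list (x # w # replicate m c) - 1/2 \<in> \<int>" by (simp add: sum_list_replicate w_def)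
        show "sum_list (map \<pi> (x # w # replicate m c)) = 1"
          using qpos by (simp add: sum_list_replicate px pw pc mr field_simps)
      qed
      then have "\<pi>1 x + real m * (1 / real q) = 1" by (simp add: sum_list_replicate zero[OF pw] pc1)
      then show ?thesis using qpos by (simp add: px mr field_simps)
    next
      case False
      define d where "d = 1/2 + c"
      have Ld: "L d = of_int 1 + 1 / of_nat q" by (simp add: d_def L_add L_half Lc)
      have pd: "\<pi> d = 1 / real q"
        using phi_frac_int[OF r01, of 1] by (simp add: pi_eq Ld of_rat_divide)
      have pd1: "\<pi>1 d = 1 / real q"
      proof -
        define m where "m = q - 2"
        have mr: "real m = real q - 2" "rat_of_nat m = of_nat q - 2" using q2 by (auto simp: m_def)
        define w where "w = 1/2 - d - d - of_nat m * c"
        have Lw: "L w = of_int (-2)"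
        proof -
          have "L w = 1 - L d - L d - of_nat m * (1 / of_nat q)" by (simp only: w_def L_diff L_half L_nat_mult Lc)
          also have "\<dots> = of_int (-2)" using qpos by (simp add: Ld mr field_simps)
          finally show ?thesis .
        qed
        have pw: "\<pi> w = 0" using Lw phi_even[of "-2"] by (simp add: pi_eq)
        have "sum_list (map \<pi>1 (d # d # w # replicate m c)) = 1"
        proof (rule tight)
          show "sum_list (d # d # w # replicate m c) - 1/2 \<in> \<int>" by (simp add: sum_list_replicate w_def)
          show "sum_list (map \<pi> (d # d # w # replicate m c)) = 1"
            using qpos by (simp add: sum_list_replicate pd pw pc mr field_simps)
        qed
        then have "2 * \<pi>1 d + real m * (1 / real q) = 1" by (simp add: sum_list_replicate zero[OF pw] pc1)
        then show ?thesis using qpos by (simp add: mr field_simps)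
      qed
      define m where "m = q - p - 1"
      have mr: "real m = real q - real p - 1" "rat_of_nat m = of_nat q - of_nat p - 1" using pq by (auto simp: m_def)
      define w where "w = 1/2 - x - d - of_nat m * c"
      have Lw: "L w = of_int (-n - 1)"
      proof -
        have "L w = 1 - L x - L d - of_nat m * (1 / of_nat q)" by (simp only: w_def L_diff L_half L_nat_mult Lc)
        also have "\<dots> = of_int (-n - 1)" using qpos by (simp add: Lx Ld mr field_simps)
        finally show ?thesis .
      qed
      have pw: "\<pi> w = 0" using Lw False phi_even[of "-n-1"] by (simp add: pi_eq)
      have "sum_list (map \<pi>1 (x # d # w # replicate m c)) = 1"
      proof (rule tight)
        show "sum_list (x # d # w # replicate m c) - 1/2 \<in> \<int>" by (simp add: sum_list_replicate w_def)
        show "sum_list (map \<pi> (x # d # w # replicate m c)) = 1"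
          using qpos by (simp add: sum_list_replicate px pd pw pc mr field_simps)
      qed
      then have "\<pi>1 x + 1 / real q + real m * (1 / real q) = 1" by (simp add: sum_list_replicate zero[OF pw] pc1 pd1)
      then show ?thesis using qpos by (simp add: px mr field_simps)
    qed
  qed
qed

end


theorem mainTheorem3:
  fixes B :: "real set" and \<pi> :: "real \<Rightarrow> real"
  assumes "hamel_basis B" and "(1/2 :: real) \<in> B"
    and "\<And>x. \<pi> x = (let l = hamel_coeff B x (1/2) in
                 if (\<exists>k::int. l = of_int k \<and> odd k) then 1
                 else of_rat (l - of_int \<lfloor>l\<rfloor>))"
  shows "extreme_function (1/2) \<pi>"
proof -
  interpret hamel_pi B \<pi>
  proof
    show "hamel_basis B" "(1/2 :: real) \<in> B" by fact+
    fix x show "\<pi> x = phi (hamel_ctx.L B x)"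
      using assms(3)[of x] assms(1,2) by (simp add: hamel_ctx.L_def hamel_ctx_def phi_def Let_def)
  qed
  show ?thesis
    unfolding extreme_function_def
  proof (intro conjI valid_pi allI impI)
    fix \<pi>1 \<pi>2
    assume h: "valid_function (1/2) \<pi>1 \<and> valid_function (1/2) \<pi>2 \<and> \<pi> = (\<lambda>x. 1/2 * \<pi>1 x + 1/2 * \<pi>2 x)"
    have e1: "\<pi>1 x = \<pi> x" for x using main_eq h by blast
    have e2: "\<pi>2 x = \<pi> x" for x
    proof -
      have "\<pi> x = 1/2 * \<pi>1 x + 1/2 * \<pi>2 x" using h by (simp add: fun_eq_iff)
      then show ?thesis using e1[of x] by linarith
    qed
    show "\<pi>1 = \<pi>" using e1 by (simp add: fun_eq_iff)
    show "\<pi>2 = \<pi>" using e2 by (simp add: fun_eq_iff)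
  qed
qed

end
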